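(* Let $J(\boldsymbol{x}) = \min_{i \in \{1,\dots,m\}} J_i(\boldsymbol{x})$ for every $\boldsymbol{x}\in\mathbb{R}^n$, where each $J_i\colon\mathbb{R}^n\to\mathbb{R}\cup\{+\infty\}$ is convex, proper and lower semicontinuous, and let $H_1,\dots,H_N\colon\mathbb{R}^n\to\mathbb{R}$ be convex and 1-coercive with at least one $H_j$ strictly convex; $H_j^*$ denotes the Legendre transform of $H_j$. For $\boldsymbol{x}\in\mathbb{R}^n$ and $t_1,\dots,t_N>0$ define $$S_i(\boldsymbol{x},t_1,\dots,t_N) = \min_{\boldsymbol{u}_1,\dots,\boldsymbol{u}_N\in\mathbb{R}^n}\left\{ J_i\left(\boldsymbol{x}-\sum_{j=1}^N\boldsymbol{u}_j\right) + \sum_{j=1}^N t_j H_j^*\left(\frac{\boldsymbol{u}_j}{t_j}\right)\right\},$$ and let $S(\boldsymbol{x},t_1,\dots,t_N)$ be the same expression with $J$ in place of $J_i$. Then $S(\boldsymbol{x},t_1,\dots,t_N)=\min_{i\in\{1,\dots,m\}}S_i(\boldsymbol{x},t_1,\dots,t_N)$, and the set $M\subset\mathbb{R}^{n\times N}$ of minimizers of the problem defining $S(\boldsymbol{x},t_1,\dots,t_N)$ satisfies $$M = \bigcup_{i\in I(\boldsymbol{x},t_1,\dots, t_N)}\operatorname{arg\,min}_{\boldsymbol{u}_1,\dots, \boldsymbol{u}_N\in\mathbb{R}^n} \left\{ J_i\left(\boldsymbol{x} - \sum_{j=1}^N\boldsymbol{u}_j\right) + \sum_{j=1}^N t_j H_j^*\left(\frac{\boldsymbol{u}_j}{t_j}\right)\right\},$$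 where $I(\boldsymbol{x},t_1,\dots, t_N) = \operatorname{arg\,min}_{i \in \{1,\dots,m\}} S_i(\boldsymbol{x},t_1,\dots, t_N)$.
   Context: Min-plus algebra technique for the multi-time Hamilton--Jacobi PDE system $\partial_{t_j} S + H_j(\nabla_{\boldsymbol{x}} S)=0$ ($j=1,\dots,N$), $S(\boldsymbol{x},0,\dots,0)=J(\boldsymbol{x})$, whose solution is given by the generalized Lax--Oleinik formula above; this corresponds to image decomposition models $\min \{J(\boldsymbol{x}-\sum_i\boldsymbol{u}_i)+\sum_i\lambda_i f_i(\boldsymbol{u}_i)\}$ with $\lambda_i f_i = t_iH_i^*(\cdot/t_i)$. $S_i$ is the solution with initial data $J_i$. *)

theory Defs
  imports "HOL-Analysis.Analysis"
begin

definition ext_convex :: "('a::real_vector \<Rightarrow> ereal) \<Rightarrow> bool" where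
  "ext_convex f \<longleftrightarrow> (\<forall>x y. \<forall>l::real. 0 < l \<and> l < 1 \<longrightarrow>
      f (l *\<^sub>R x + (1 - l) *\<^sub>R y) \<le> ereal l * f x + ereal (1 - l) * f y)"

definition ext_proper :: "('a \<Rightarrow> ereal) \<Rightarrow> bool" where
  "ext_proper f \<longleftrightarrow> (\<forall>x. f x \<noteq> -\<infinity>) \<and> (\<exists>x. f x \<noteq> \<infinity>)"

definition ext_lsc :: "('a::topological_space \<Rightarrow> ereal) \<Rightarrow> bool" where
  "ext_lsc f \<longleftrightarrow> (\<forall>x. \<forall>c < f x. eventually (\<lambda>z. c < f z) (nhds x))"

definition strictly_convex :: "('a::real_vector \<Rightarrow> real) \<Rightarrow> bool" where
  "strictly_convex f \<longleftrightarrow> (\<forall>x y. x \<noteq> y \<longrightarrow> (\<forall>l::real. 0 < l \<and> l < 1 \<longrightarrow>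
      f (l *\<^sub>R x + (1 - l) *\<^sub>R y) < l * f x + (1 - l) * f y))"

definition one_coercive :: "('a::real_normed_vector \<Rightarrow> real) \<Rightarrow> bool" where
  "one_coercive f \<longleftrightarrow> filterlim (\<lambda>x. f x / norm x) at_top at_infinity"

text \<open>Legendre transform (finite-valued for convex 1-coercive H).\<close>
definition legendre :: "('a::real_inner \<Rightarrow> real) \<Rightarrow> 'a \<Rightarrow> real" where
  "legendre H p = (SUP x. p \<bullet> x - H x)"

text \<open>Objective of the generalized Lax--Oleinik formula, with indices j ranging over
  the finite type 'k (so u :: 'k \<Rightarrow> 'a is an element of R^{n\<times>N}).\<close>
definition LO_obj :: "('a::real_inner \<Rightarrow> ereal) \<Rightarrow> ('k::finite \<Rightarrow> 'a \<Rightarrow> real)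
    \<Rightarrow> 'a \<Rightarrow> ('k \<Rightarrow> real) \<Rightarrow> ('k \<Rightarrow> 'a) \<Rightarrow> ereal" where
  "LO_obj J H x t u = J (x - (\<Sum>j\<in>UNIV. u j))
      + ereal (\<Sum>j\<in>UNIV. t j * legendre (H j) ((1 / t j) *\<^sub>R u j))"

definition LO_val :: "('a::real_inner \<Rightarrow> ereal) \<Rightarrow> ('k::finite \<Rightarrow> 'a \<Rightarrow> real)
    \<Rightarrow> 'a \<Rightarrow> ('k \<Rightarrow> real) \<Rightarrow> ereal" where
  "LO_val J H x t = (INF u. LO_obj J H x t u)"

definition LO_argmin :: "('a::real_inner \<Rightarrow> ereal) \<Rightarrow> ('k::finite \<Rightarrow> 'a \<Rightarrow> real)
    \<Rightarrow> 'a \<Rightarrow> ('k \<Rightarrow> real) \<Rightarrow> ('k \<Rightarrow> 'a) set" where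
  "LO_argmin J H x t = {u. \<forall>v. LO_obj J H x t u \<le> LO_obj J H x t v}"

end

theory Submission
  imports Defs
begin

lemma obj_Min:
  fixes Js :: "'m::finite \<Rightarrow> 'a::real_inner \<Rightarrow> ereal"
  assumes "\<And>y. J y = Min (range (\<lambda>i. Js i y))"
  shows "LO_obj J H x t u = Min (range (\<lambda>i. LO_obj (Js i) H x t u))"
proof -
  define c where "c = ereal (\<Sum>j\<in>UNIV. t j * legendre (H j) ((1 / t j) *\<^sub>R u j))"
  have m: "mono (\<lambda>z::ereal. z + c)" by (auto simp: mono_def add_right_mono)
  have "LO_obj J H x t u = Min (range (\<lambda>i. Js i (x - (\<Sum>j\<in>UNIV. u j)))) + c"
    unfolding LO_obj_def c_def assms ..
  also have "\<dots> = Min ((\<lambda>z. z + c) ` range (\<lambda>i. Js i (x - (\<Sum>j\<in>UNIV. u j))))"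
    by (rule mono_Min_commute[OF m]) auto
  also have "\<dots> = Min (range (\<lambda>i. LO_obj (Js i) H x t u))"
    unfolding LO_obj_def c_def by (simp add: image_image)
  finally show ?thesis .
qed

theorem mainTheorem2:
  fixes Js :: "'m::finite \<Rightarrow> 'a::euclidean_space \<Rightarrow> ereal"
    and J :: "'a \<Rightarrow> ereal"
    and H :: "'k::finite \<Rightarrow> 'a \<Rightarrow> real"
    and x :: 'a and t :: "'k \<Rightarrow> real"
  assumes J_def: "\<And>y. J y = Min (range (\<lambda>i. Js i y))"
    and Js_convex: "\<And>i. ext_convex (Js i)"
    and Js_proper: "\<And>i. ext_proper (Js i)"
    and Js_lsc: "\<And>i. ext_lsc (Js i)"
    and H_convex: "\<And>j. convex_on UNIV (H j)"
    and H_coercive: "\<And>j. one_coercive (H j)"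
    and H_strict: "\<exists>j. strictly_convex (H j)"
    and t_pos: "\<And>j. t j > 0"
  shows "LO_val J H x t = Min (range (\<lambda>i. LO_val (Js i) H x t))
    \<and> LO_argmin J H x t =
        (\<Union>i\<in>{i. \<forall>k. LO_val (Js i) H x t \<le> LO_val (Js k) H x t}. LO_argmin (Js i) H x t)"
proof -
  let ?o = "\<lambda>i u. LO_obj (Js i) H x t u"
  let ?v = "\<lambda>i. LO_val (Js i) H x t"
  have ob: "\<And>u. LO_obj J H x t u = Min (range (\<lambda>i. ?o i u))"
    by (rule obj_Min[OF J_def])
  have ex: "\<And>u. \<exists>i. LO_obj J H x t u = ?o i u"
  proof -
    fix u
    have "Min (range (\<lambda>i. ?o i u)) \<in> range (\<lambda>i. ?o i u)" by (rule Min_in) auto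
    then obtain i where "Min (range (\<lambda>i. ?o i u)) = ?o i u" by blast
    then show "\<exists>i. LO_obj J H x t u = ?o i u" using ob by metis
  qed
  have le: "\<And>u i. LO_obj J H x t u \<le> ?o i u" using ob by simp
  have val: "LO_val J H x t = Min (range ?v)"
  proof (rule antisym)
    show "LO_val J H x t \<le> Min (range ?v)"
    proof (subst Min_ge_iff, simp, simp, intro ballI)
      fix a assume "a \<in> range ?v"
      then obtain i where a: "a = ?v i" by auto
      show "LO_val J H x t \<le> a" unfolding a LO_val_def
        by (rule INF_mono) (use le in blast)
    qed
    show "Min (range ?v) \<le> LO_val J H x t" unfolding LO_val_def[of J]
    proof (rule INF_greatest)
      fix u
      obtain i where i: "LO_obj J H x t u = ?o i u" using ex by blast
      have "Min (range ?v) \<le> ?v i" by simp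
      also have "\<dots> \<le> ?o i u" unfolding LO_val_def by (rule INF_lower) simp
      finally show "Min (range ?v) \<le> LO_obj J H x t u" using i by simp
    qed
  qed
  have am: "\<And>K u. u \<in> LO_argmin K H x t \<longleftrightarrow> LO_obj K H x t u \<le> LO_val K H x t"
  proof -
    fix K u
    show "u \<in> LO_argmin K H x t \<longleftrightarrow> LO_obj K H x t u \<le> LO_val K H x t"
    proof
      assume "u \<in> LO_argmin K H x t"
      then show "LO_obj K H x t u \<le> LO_val K H x t"
        unfolding LO_argmin_def LO_val_def by (auto intro: INF_greatest)
    next
      assume a: "LO_obj K H x t u \<le> LO_val K H x t"
      have "\<And>v. LO_val K H x t \<le> LO_obj K H x t v"
        unfolding LO_val_def by (rule INF_lower) simp
      then show "u \<in> LO_argmin K H x t" using a unfolding LO_argmin_def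
        using order_trans by blast
    qed
  qed
  have "LO_argmin J H x t =
        (\<Union>i\<in>{i. \<forall>k. ?v i \<le> ?v k}. LO_argmin (Js i) H x t)"
  proof (intro set_eqI iffI)
    fix u assume "u \<in> LO_argmin J H x t"
    then have u: "LO_obj J H x t u \<le> Min (range ?v)" using am val by simp
    obtain i where i: "LO_obj J H x t u = ?o i u" using ex by blast
    have vi: "?v i \<le> ?o i u" unfolding LO_val_def by (rule INF_lower) simp
    have mi: "Min (range ?v) \<le> ?v i" by simp
    have "\<forall>k. ?v i \<le> ?v k"
    proof
      fix k
      have "Min (range ?v) \<le> ?v k" by simp
      then show "?v i \<le> ?v k" using u i vi by (metis (no_types) order_trans)
    qed
    moreover have "?o i u \<le> ?v i" using u i mi by (metis (no_types) order_trans)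
    then have "u \<in> LO_argmin (Js i) H x t" using am by blast
    ultimately show "u \<in> (\<Union>i\<in>{i. \<forall>k. ?v i \<le> ?v k}. LO_argmin (Js i) H x t)" by blast
  next
    fix u assume "u \<in> (\<Union>i\<in>{i. \<forall>k. ?v i \<le> ?v k}. LO_argmin (Js i) H x t)"
    then obtain i where i: "\<forall>k. ?v i \<le> ?v k" and ui: "?o i u \<le> ?v i" using am by blast
    have "?v i \<le> Min (range ?v)" using i by (subst Min_ge_iff) auto
    then have "LO_obj J H x t u \<le> LO_val J H x t" using val le[of u i] ui by (metis (no_types) order_trans)
    then show "u \<in> LO_argmin J H x t" using am by blast
  qed
  with val show ?thesis by simp
qed

end
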